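(* $R(B_2,B_{10}) \ge 25$; that is, there exists a graph on $24$ vertices containing no copy of $B_2$ whose complement contains no copy of $B_{10}$.
   Context: For graphs $G,H$, the Ramsey number $R(G,H)$ is the smallest integer $N$ such that every red/blue coloring of the edges of $K_N$ contains a red copy of $G$ (as a subgraph, not necessarily induced) or a blue copy of $H$. The book $B_k$ is the graph on $k+2$ vertices consisting of an edge $uv$ together with $k$ further vertices, each adjacent exactly to $u$ and $v$. *)

theory Defs
  imports Main
begin

text \<open>A graph with vertex set {0..<n} is given by a pair (n, E), where E is a
symmetric irreflexive edge relation (only its values on {0..<n} matter).\<close>

type_synonym graph = "nat \<times> (nat \<Rightarrow> nat \<Rightarrow> bool)"

text \<open>The book B_k: vertices 0 (=u), 1 (=v), 2..k+1 (pages).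
Edges: uv, and u-i, v-i for each page i.\<close>
definition book :: "nat \<Rightarrow> graph" where
  "book k = (k + 2, (\<lambda>x y. x \<noteq> y \<and> (x \<le> 1 \<or> y \<le> 1)))"

definition contains_copy :: "nat \<Rightarrow> (nat \<Rightarrow> nat \<Rightarrow> bool) \<Rightarrow> graph \<Rightarrow> bool" where
  "contains_copy N E G \<longleftrightarrow>
     (\<exists>f. inj_on f {0..<fst G} \<and> f ` {0..<fst G} \<subseteq> {0..<N} \<and>
          (\<forall>x\<in>{0..<fst G}. \<forall>y\<in>{0..<fst G}. snd G x y \<longrightarrow> E (f x) (f y)))"

text \<open>A red/blue colouring of the edges of K_N: a symmetric predicate red on
pairs of distinct vertices of {0..<N}; the other edges are blue.
N arrows (G,H): every colouring has a red G or a blue H.\<close>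
definition arrows :: "nat \<Rightarrow> graph \<Rightarrow> graph \<Rightarrow> bool" where
  "arrows N G H \<longleftrightarrow>
     (\<forall>red :: nat \<Rightarrow> nat \<Rightarrow> bool. (\<forall>x y. red x y = red y x) \<longrightarrow>
        contains_copy N (\<lambda>x y. x \<noteq> y \<and> red x y) G \<or>
        contains_copy N (\<lambda>x y. x \<noteq> y \<and> \<not> red x y) H)"

definition ramsey_number :: "graph \<Rightarrow> graph \<Rightarrow> nat" where
  "ramsey_number G H = (LEAST N. arrows N G H)"

end

theory Submission
  imports Defs
begin

definition nbl :: "nat list list" where
  "nbl = [[3, 4, 6, 11, 13, 15, 19, 22, 23], [2, 3, 4, 10, 11, 14, 19, 21], [1, 3, 5, 6, 7, 13, 15, 18, 23], [0, 1, 2, 8, 9, 12, 16, 17, 20], [0, 1, 6, 7, 8, 10, 12, 18, 20], [2, 6, 8, 10, 11, 12, 19, 20, 22], [0, 2, 4, 5, 9, 14, 16, 17, 21], [2, 4, 8, 9, 11, 16, 21, 22, 23], [3, 4, 5, 7, 13, 14, 15, 17, 19], [3, 6, 7, 10, 12, 14, 15, 19, 22], [1, 4, 5, 9, 13, 15, 16, 17, 23], [0, 1, 5, 7, 12, 14, 15, 16, 17], [3, 4, 5, 9, 11, 13, 18, 21, 23], [0, 2, 8, 10, 12, 14, 16, 21, 22], [1, 6, 8, 9, 11, 13, 20, 23], [0, 2, 8, 9, 10, 11, 18, 20, 21], [3, 6, 7, 10, 11, 13, 18, 19, 20], [3, 6, 8, 10, 11, 18, 21, 22, 23], [2, 4,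 12, 15, 16, 17, 19, 22], [0, 1, 5, 8, 9, 16, 18, 21, 23], [3, 4, 5, 14, 15, 16, 21, 22, 23], [1, 6, 7, 12, 13, 15, 17, 19, 20], [0, 5, 7, 9, 13, 17, 18, 20], [0, 2, 7, 10, 12, 14, 17, 19, 20]]"

definition P :: "nat \<Rightarrow> nat list \<Rightarrow> nat \<Rightarrow> nat list \<Rightarrow> bool" where
  "P x Nx y Ny = (x < 24 \<and> list_all (\<lambda>z. z < 24) Nx \<and> (y \<in> set Nx \<longleftrightarrow> x \<in> set Ny) \<and> x \<notin> set Nx \<and>
     (if y \<in> set Nx then length (filter (\<lambda>z. z \<in> set Ny) Nx) \<le> 1
      else x = y \<or> 13 \<le> length (remdups (Nx @ Ny))))"

lemma chk: "list_all (\<lambda>(x,Nx). list_all (\<lambda>(y,Ny). P x Nx y Ny) (zip [0..<24] nbl)) (zip [0..<24] nbl)"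
  by (simp add: nbl_def upt_rec P_def)

lemma nbl_len: "length nbl = 24"
  by (simp add: nbl_def)

lemma in_zip: "x < 24 \<Longrightarrow> (x, nbl ! x) \<in> set (zip [0..<24] nbl)"
  unfolding in_set_zip using nbl_len by (intro exI[of _ x]) auto

lemma Pall: "x < 24 \<Longrightarrow> y < 24 \<Longrightarrow> P x (nbl ! x) y (nbl ! y)"
proof -
  assume x: "x < 24" and y: "y < 24"
  have H: "\<forall>(x,Nx)\<in>set (zip [0..<24] nbl). \<forall>(y,Ny)\<in>set (zip [0..<24] nbl). P x Nx y Ny"
    using chk by (simp add: list_all_iff)
  have "\<forall>(y,Ny)\<in>set (zip [0..<24] nbl). P x (nbl ! x) y Ny"
    using bspec[OF H in_zip[OF x]] by simp
  from bspec[OF this in_zip[OF y]] show ?thesis by simp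
qed

definition R :: "nat \<Rightarrow> nat \<Rightarrow> bool" where
  "R x y = (x < 24 \<and> y < 24 \<and> y \<in> set (nbl ! x))"

lemma Rsym: "R x y = R y x"
  unfolding R_def using Pall by (auto simp: P_def)

lemma Rirr: "\<not> R x x"
  unfolding R_def using Pall by (auto simp: P_def)

lemma ent: "x < 24 \<Longrightarrow> z \<in> set (nbl ! x) \<Longrightarrow> z < 24"
  using Pall[of x x] by (auto simp: P_def list_all_iff)

lemma tri: assumes "R a b" shows "card {z. R a z \<and> R b z} \<le> 1"
proof -
  have ab: "a < 24" "b < 24" "b \<in> set (nbl ! a)" using assms by (auto simp: R_def)
  have "{z. R a z \<and> R b z} = set (filter (\<lambda>z. z \<in> set (nbl ! b)) (nbl ! a))"
    using ab ent by (auto simp: R_def)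
  moreover have "length (filter (\<lambda>z. z \<in> set (nbl ! b)) (nbl ! a)) \<le> 1"
    using Pall[OF ab(1) ab(2)] ab(3) by (simp add: P_def)
  ultimately show ?thesis using card_length order_trans by metis
qed

lemma co: assumes "a < 24" "b < 24" "a \<noteq> b" "\<not> R a b"
  shows "card {z. z < 24 \<and> z \<noteq> a \<and> z \<noteq> b \<and> \<not> R a z \<and> \<not> R b z} \<le> 9"
proof -
  let ?U = "set (nbl ! a) \<union> set (nbl ! b)"
  have nab: "b \<notin> set (nbl ! a)" using assms by (simp add: R_def)
  have nba: "a \<notin> set (nbl ! b)" using assms Rsym[of a b] by (simp add: R_def)
  have aa: "a \<notin> set (nbl ! a)" "b \<notin> set (nbl ! b)" using Rirr assms by (auto simp: R_def)
  have S: "{z. z < 24 \<and> z \<noteq> a \<and> z \<noteq> b \<and> \<not> R a z \<and> \<not> R b z} = {0..<24} - ({a,b} \<union> ?U)"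
    using assms by (auto simp: R_def)
  have sub: "{a,b} \<union> ?U \<subseteq> {0..<24}" using assms ent by auto
  have len: "13 \<le> length (remdups (nbl ! a @ nbl ! b))"
    using Pall[OF assms(1) assms(2)] nab assms(3) by (simp add: P_def)
  have cU: "card ?U = length (remdups (nbl ! a @ nbl ! b))"
    by (metis distinct_card distinct_remdups set_append set_remdups)
  have "card ({a,b} \<union> ?U) = card {a,b} + card ?U"
    by (rule card_Un_disjoint) (use nab nba aa in auto)
  also have "card {a,b} = 2" using assms(3) by simp
  finally have "card ({a,b} \<union> ?U) \<ge> 15" using len cU by simp
  then have "card ({0..<24::nat} - ({a,b} \<union> ?U)) \<le> 9"
    using card_Diff_subset[OF finite_subset[OF sub] sub] by simp
  then show ?thesis using S by simp
qed

theorem mainTheorem6: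
  shows "\<forall>N. arrows N (book 2) (book 10) \<longrightarrow> 25 \<le> N"
proof (intro allI impI)
  fix N assume A: "arrows N (book 2) (book 10)"
  show "25 \<le> N"
  proof (rule ccontr)
    assume "\<not> 25 \<le> N" hence N: "N \<le> 24" by simp
    from A have "contains_copy N (\<lambda>x y. x \<noteq> y \<and> R x y) (book 2) \<or>
        contains_copy N (\<lambda>x y. x \<noteq> y \<and> \<not> R x y) (book 10)"
      unfolding arrows_def using Rsym by blast
    then show False
    proof
      assume "contains_copy N (\<lambda>x y. x \<noteq> y \<and> R x y) (book 2)"
      then obtain f :: "nat \<Rightarrow> nat" where inj: "inj_on f {0..<4}" and
        E: "\<forall>x\<in>{0..<4}. \<forall>y\<in>{0..<4}. x \<noteq> y \<and> (x \<le> 1 \<or> y \<le> 1) \<longrightarrow> f x \<noteq> f y \<and> R (f x) (f y)"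
        by (auto simp: contains_copy_def book_def)
      have e01: "R (f 0) (f 1)" using E by auto
      have "R (f 0) (f 2)" "R (f 1) (f 2)" "R (f 0) (f 3)" "R (f 1) (f 3)" using E by auto
      hence sub: "{f 2, f 3} \<subseteq> {z. R (f 0) z \<and> R (f 1) z}" by auto
      have fin: "finite {z. R (f 0) z \<and> R (f 1) z}"
        by (rule finite_subset[of _ "{0..<24}"]) (auto simp: R_def)
      have "f 2 \<noteq> f 3" using inj by (auto dest: inj_onD[of f _ 2 3])
      hence "card {f 2, f 3} = 2" by simp
      hence "2 \<le> card {z. R (f 0) z \<and> R (f 1) z}" using card_mono[OF fin sub] by simp
      thus False using tri[OF e01] by simp
    next
      assume "contains_copy N (\<lambda>x y. x \<noteq> y \<and> \<not> R x y) (book 10)"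
      then obtain f :: "nat \<Rightarrow> nat" where inj: "inj_on f {0..<12}" and rng: "f ` {0..<12} \<subseteq> {0..<N}" and
        E: "\<forall>x\<in>{0..<12}. \<forall>y\<in>{0..<12}. x \<noteq> y \<and> (x \<le> 1 \<or> y \<le> 1) \<longrightarrow> f x \<noteq> f y \<and> \<not> R (f x) (f y)"
        by (auto simp: contains_copy_def book_def)
      have lt: "\<And>i. i < 12 \<Longrightarrow> f i < 24" proof -
        fix i :: nat assume "i < 12"
        hence "i \<in> {0..<12}" by simp
        hence "f i \<in> {0..<N}" using rng by (meson image_eqI subsetD)
        thus "f i < 24" using N by simp
      qed
      have e01: "f 0 \<noteq> f 1" "\<not> R (f 0) (f 1)" using E by auto
      let ?C = "{z. z < 24 \<and> z \<noteq> f 0 \<and> z \<noteq> f 1 \<and> \<not> R (f 0) z \<and> \<not> R (f 1) z}"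
      have sub: "f ` {2..<12} \<subseteq> ?C"
      proof
        fix z assume "z \<in> f ` {2..<12}"
        then obtain i where i: "2 \<le> i" "i < 12" "z = f i" by auto
        have "f 0 \<noteq> f i \<and> \<not> R (f 0) (f i)" using E i by auto
        moreover have "f 1 \<noteq> f i \<and> \<not> R (f 1) (f i)" using E i by auto
        ultimately show "z \<in> ?C" using i lt by auto
      qed
      have "card (f ` {2..<12}) = 10"
        using card_image[OF inj_on_subset[OF inj, of "{2..<12}"]] by simp
      moreover have "card (f ` {2..<12}) \<le> card ?C"
        by (rule card_mono[OF _ sub]) auto
      ultimately show False using co[OF lt[of 0] lt[of 1] e01] by simp
    qed
  qed
qed

end
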